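(* Let $q>4$. For any distinct $x,y,z\in\mathbb{Z}_q$ there exists an $\mathcal{OS}_q(2)$ of period $q(q-1)/2$ if $q$ is odd, or $q(q-2)/2$ if $q$ is even, whose ring sequence has the form $[x,y,z,x,\ldots]$ (i.e. its first four terms are $x,y,z,x$). Moreover, if $x,y,z\neq 0$, then there exists an $\mathcal{OS}_q(2)$ of the same period whose ring sequence has the form $[0,x,y,z,x,\ldots]$.
   Context: For a periodic sequence $S=(s_i)$ over $\mathbb{Z}_q$ write $\mathbf{s}_n(i)=(s_i,\ldots,s_{i+n-1})$ and let $\mathbf{u}^R$ denote the reverse of a tuple. An $\mathcal{OS}_q(n)$ (orientable sequence) is a periodic sequence of period $m$ over $\mathbb{Z}_q$ such that $\mathbf{s}_n(i)=\mathbf{s}_n(j)$ implies $i\equiv j\pmod m$, and $\mathbf{s}_n(i)\neq\mathbf{s}_n(j)^R$ for all $i,j$. The ring sequence of a sequence of period $m$ is one period $[s_0,\ldots,s_{m-1}]$, listed from some starting position. *)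

theory Defs
  imports Main
begin

text \<open>A periodic sequence of period m over Z_q is represented by one period
  (its ring sequence) xs, a list of length m with entries in {0..<q};
  the sequence is s_i = xs ! (i mod m).\<close>

definition seq_at :: "nat list \<Rightarrow> nat \<Rightarrow> nat" where
  "seq_at xs i = xs ! (i mod length xs)"

definition window :: "nat list \<Rightarrow> nat \<Rightarrow> nat \<Rightarrow> nat list" where
  "window xs n i = map (\<lambda>k. seq_at xs (i + k)) [0..<n]"

definition orientable_seq :: "nat \<Rightarrow> nat \<Rightarrow> nat list \<Rightarrow> bool" where
  "orientable_seq q n xs \<longleftrightarrow>
     xs \<noteq> [] \<and> set xs \<subseteq> {0..<q} \<and>
     (\<forall>i j. window xs n i = window xs n j \<longrightarrow> i mod length xs = j mod length xs) \<and>
     (\<forall>i j. window xs n i \<noteq> rev (window xs n j))"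

end

theory Submission
  imports Defs
begin

definition bf :: "nat \<Rightarrow> nat \<Rightarrow> nat" where
  "bf q i = (if i = 2*q then q+1 else if even i then i div 2 else q + (i div 2) mod 2)"

definition lenB :: "nat \<Rightarrow> nat" where
  "lenB q = (if odd q then 2*q+1 else 2*q)"

lemma bf_ev: "v < q \<Longrightarrow> bf q (2*v) = v" by (simp add: bf_def)
lemma bf_od: "bf q (Suc (2*v)) = q + v mod 2" by (simp add: bf_def) presburger
lemma bf_la: "bf q (2*q) = q + 1" by (simp add: bf_def)

lemma idx_cases:
  assumes "i < lenB q" "q \<ge> 5"
  obtains v where "i = 2*v" "v < q" "Suc i mod lenB q = 2*v+1"
  | v where "i = 2*v+1" "v+1 < q" "Suc i mod lenB q = 2*(v+1)"
  | "i = 2*q-1" "even q" "Suc i mod lenB q = 2*0"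
  | "i = 2*q-1" "odd q" "Suc i mod lenB q = 2*q"
  | "i = 2*q" "odd q" "Suc i mod lenB q = 2*0"
proof -
  consider "i < 2*q-1" | "i = 2*q-1" | "i = 2*q" using assms by (force simp: lenB_def split: if_splits)
  then show ?thesis
  proof cases
    case 1
    then show ?thesis
    proof (cases "even i")
      case True
      then obtain v where "i = 2*v" by blast
      moreover have "Suc i mod lenB q = 2*v+1" using 1 calculation by (simp add: lenB_def)
      ultimately show ?thesis using that 1 by auto
    next
      case False
      then obtain v where "i = 2*v+1" using oddE by blast
      moreover have "Suc i mod lenB q = 2*(v+1)" using 1 calculation by (simp add: lenB_def)
      ultimately show ?thesis using that 1 by auto
    qed
  next
    case 2
    then show ?thesis using that assms by (cases "even q") (auto simp: lenB_def)
  next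
    case 3
    then show ?thesis using that assms by (cases "even q") (auto simp: lenB_def)
  qed
qed

lemma edge_cases:
  assumes "i < lenB q" "q \<ge> 5"
  obtains v where "i = 2*v" "v < q" "bf q i = v" "bf q (Suc i mod lenB q) = q + v mod 2"
  | v where "i = 2*v+1" "v+1 < q" "bf q i = q + v mod 2" "bf q (Suc i mod lenB q) = v+1"
  | "i = 2*q-1" "even q" "bf q i = q+1" "bf q (Suc i mod lenB q) = 0"
  | "i = 2*q-1" "odd q" "bf q i = q" "bf q (Suc i mod lenB q) = q+1"
  | "i = 2*q" "odd q" "bf q i = q+1" "bf q (Suc i mod lenB q) = 0"
  using assms
proof (cases rule: idx_cases)
  case (1 v)
  have a: "bf q i = v" using 1(1,2) bf_ev by simp
  have b: "bf q (Suc i mod lenB q) = q + v mod 2" unfolding 1(3) using bf_od by simp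
  show ?thesis by (rule that(1)[OF 1(1,2) a b])
next
  case (2 v)
  have a: "bf q i = q + v mod 2" unfolding 2(1) using bf_od by simp
  have b: "bf q (Suc i mod lenB q) = v+1" unfolding 2(3) using bf_ev[of "v+1" q] 2(2) by simp
  show ?thesis by (rule that(2)[OF 2(1,2) a b])
next
  case 3
  have e: "i = Suc (2*(q-1))" using 3(1) assms(2) by simp
  have m: "(q-1) mod 2 = 1" using 3(2) assms(2) by presburger
  have a: "bf q i = q + 1" unfolding e bf_od m by simp
  have b: "bf q (Suc i mod lenB q) = 0" unfolding 3(3) using bf_ev[of 0 q] assms(2) by simp
  show ?thesis by (rule that(3)[OF 3(1,2) a b])
next
  case 4
  have e: "i = Suc (2*(q-1))" using 4(1) assms(2) by simp
  have m: "(q-1) mod 2 = 0" using 4(2) assms(2) by presburger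
  have a: "bf q i = q" unfolding e bf_od m by simp
  have b: "bf q (Suc i mod lenB q) = q+1" unfolding 4(3) using bf_la by simp
  show ?thesis by (rule that(4)[OF 4(1,2) a b])
next
  case 5
  have a: "bf q i = q + 1" unfolding 5(1) using bf_la by simp
  have b: "bf q (Suc i mod lenB q) = 0" unfolding 5(3) using bf_ev[of 0 q] assms(2) by simp
  show ?thesis by (rule that(5)[OF 5(1,2) a b])
qed

lemma mod2_Suc_ne: "(Suc v mod 2 = v mod 2) = False" "(v mod 2 = Suc v mod 2) = False" by presburger+

lemma bf_loop:
  assumes "q \<ge> 5" "i < lenB q"
  shows "bf q i \<noteq> bf q (Suc i mod lenB q)"
  using assms(2,1)
  by (cases rule: edge_cases) auto

lemma bf_inj:
  assumes "q \<ge> 5" "i < lenB q" "j < lenB q"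
    and "{bf q i, bf q (Suc i mod lenB q)} = {bf q j, bf q (Suc j mod lenB q)}"
  shows "i = j"
  using assms(2,1)
proof (cases rule: edge_cases)
  case (1 v)
  note c = this
  show ?thesis using assms(3,1) c assms(4)
    by (cases rule: edge_cases) (auto simp: doubleton_eq_iff mod2_Suc_ne)
next
  case (2 v)
  note c = this
  show ?thesis using assms(3,1) c assms(4)
    by (cases rule: edge_cases) (auto simp: doubleton_eq_iff mod2_Suc_ne)
next
  case 3
  note c = this
  show ?thesis using assms(3,1) c assms(4)
    by (cases rule: edge_cases) (auto simp: doubleton_eq_iff mod2_Suc_ne)
next
  case 4
  note c = this
  show ?thesis using assms(3,1) c assms(4)
    by (cases rule: edge_cases) (auto simp: doubleton_eq_iff mod2_Suc_ne)
next
  case 5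
  note c = this
  show ?thesis using assms(3,1) c assms(4)
    by (cases rule: edge_cases) (auto simp: doubleton_eq_iff mod2_Suc_ne)
qed


definition C :: "nat list \<Rightarrow> bool" where
  "C xs \<longleftrightarrow> (\<forall>i<length xs. xs!i \<noteq> xs!(Suc i mod length xs)) \<and>
     (\<forall>i<length xs. \<forall>j<length xs. {xs!i, xs!(Suc i mod length xs)} = {xs!j, xs!(Suc j mod length xs)} \<longrightarrow> i = j)"

lemma window2:
  assumes "xs \<noteq> []"
  shows "window xs 2 i = [xs!(i mod length xs), xs!(Suc (i mod length xs) mod length xs)]"
  using assms unfolding window_def seq_at_def by (simp add: numeral_2_eq_2 mod_Suc_eq)

lemma C_orient:
  assumes "xs \<noteq> []" "C xs" "set xs \<subseteq> {0..<q}"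
  shows "orientable_seq q 2 xs"
proof -
  let ?m = "length xs"
  have m: "?m > 0" using assms by simp
  have A: "i mod ?m = j mod ?m" if "window xs 2 i = window xs 2 j" for i j
  proof -
    have "xs!(i mod ?m) = xs!(j mod ?m)" "xs!(Suc (i mod ?m) mod ?m) = xs!(Suc (j mod ?m) mod ?m)"
      using that window2[OF assms(1)] by auto
    then show ?thesis using assms(2) m unfolding C_def by (metis mod_less_divisor)
  qed
  have B: False if "window xs 2 i = rev (window xs 2 j)" for i j
  proof -
    have h: "xs!(i mod ?m) = xs!(Suc (j mod ?m) mod ?m)" "xs!(Suc (i mod ?m) mod ?m) = xs!(j mod ?m)"
      using that window2[OF assms(1)] by auto
    then have "{xs!(i mod ?m), xs!(Suc (i mod ?m) mod ?m)} = {xs!(j mod ?m), xs!(Suc (j mod ?m) mod ?m)}" by auto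
    then have "i mod ?m = j mod ?m" using assms(2) m unfolding C_def by (meson mod_less_divisor)
    with h show False using assms(2) m unfolding C_def by (metis mod_less_divisor)
  qed
  show ?thesis unfolding orientable_seq_def using assms A B by blast
qed

lemma nxt_append:
  assumes "xs \<noteq> []" "ys \<noteq> []" "ys!0 = xs!0" "i < length xs + length ys"
  shows "(xs@ys)!(Suc i mod (length xs + length ys)) =
     (if i < length xs then xs!(Suc i mod length xs) else ys!(Suc (i - length xs) mod length ys))"
proof -
  consider "Suc i < length xs" | "Suc i = length xs" | "length xs \<le> i" "Suc i < length xs + length ys"
    | "Suc i = length xs + length ys" using assms(4) by linarith
  then show ?thesis
  proof cases
    case 1 then show ?thesis by (simp add: nth_append)
  next
    case 2 then show ?thesis using assms by (simp add: nth_append)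
  next
    case 3 then show ?thesis by (simp add: nth_append Suc_diff_le)
  next
    case 4
    have "length ys > 0" using assms(2) by simp
    then have "Suc (i - length xs) = length ys" using 4 by linarith
    then show ?thesis using 4 assms by (simp add: nth_append)
  qed
qed

lemma C_append:
  assumes "xs \<noteq> []" "ys \<noteq> []" "ys!0 = xs!0" "C xs" "C ys"
    and "\<forall>i<length xs. xs!i < q \<and> xs!(Suc i mod length xs) < q"
    and "\<forall>k<length ys. \<not> (ys!k < q \<and> ys!(Suc k mod length ys) < q)"
  shows "C (xs@ys)"
proof -
  let ?n = "length xs" and ?p = "length ys"
  define a where "a = (\<lambda>i. if i < ?n then xs!i else ys!(i - ?n))"
  define b where "b = (\<lambda>i. if i < ?n then xs!(Suc i mod ?n) else ys!(Suc (i - ?n) mod ?p))"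
  have ea: "(xs@ys)!i = a i" for i unfolding a_def by (simp add: nth_append)
  have eb: "(xs@ys)!(Suc i mod length (xs@ys)) = b i" if "i < length (xs@ys)" for i
    unfolding b_def using nxt_append[OF assms(1-3)] that by simp
  have loop: "a i \<noteq> b i" if "i < ?n + ?p" for i
    using assms(4,5) that unfolding C_def a_def b_def by auto
  have inj: "i = j" if "i < ?n + ?p" "j < ?n + ?p" "{a i, b i} = {a j, b j}" for i j
  proof (cases "i < ?n")
    case True
    note T = True
    show ?thesis
    proof (cases "j < ?n")
      case True
      then show ?thesis using T that assms(4) unfolding C_def a_def b_def by auto
    next
      case False
      have "a i < q" "b i < q" using T assms(6) unfolding a_def b_def by auto
      moreover have "\<not> (a j < q \<and> b j < q)" using False that(2) assms(7) unfolding a_def b_def by auto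
      ultimately show ?thesis using that(3) by (auto simp: doubleton_eq_iff)
    qed
  next
    case False
    note F = False
    show ?thesis
    proof (cases "j < ?n")
      case True
      have "a j < q" "b j < q" using True assms(6) unfolding a_def b_def by auto
      moreover have "\<not> (a i < q \<and> b i < q)" using F that(1) assms(7) unfolding a_def b_def by auto
      ultimately show ?thesis using that(3) by (auto simp: doubleton_eq_iff)
    next
      case False
      have "i - ?n = j - ?n" using F False that assms(5) unfolding C_def a_def b_def by auto
      then show ?thesis using F False by simp
    qed
  qed
  show ?thesis unfolding C_def using ea eb loop inj by (metis length_append)
qed

definition Bl :: "nat \<Rightarrow> nat list" where
  "Bl q = map (bf q) [0..<lenB q]"

lemma lenB_pos: "q \<ge> 5 \<Longrightarrow> lenB q > 0" by (simp add: lenB_def)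

lemma C_Bl: assumes "q \<ge> 5" shows "C (Bl q)"
proof -
  have l: "length (Bl q) = lenB q" by (simp add: Bl_def)
  have n: "Bl q ! i = bf q i" if "i < lenB q" for i using that by (simp add: Bl_def)
  have n2: "Bl q ! (Suc i mod lenB q) = bf q (Suc i mod lenB q)" for i
    using lenB_pos[OF assms] by (simp add: Bl_def)
  show ?thesis unfolding C_def l using n n2 bf_loop[OF assms] bf_inj[OF assms] by simp
qed

lemma Bl_big: assumes "q \<ge> 5" "k < lenB q"
  shows "\<not> (bf q k < q \<and> bf q (Suc k mod lenB q) < q)"
  using assms(2,1) by (cases rule: edge_cases) auto

lemma Bl_small: assumes "q \<ge> 5" "k < lenB q"
  shows "bf q k < q + 2"
  using assms(2,1) by (cases rule: edge_cases) auto

definition L :: "nat \<Rightarrow> nat" where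
  "L q = (if odd q then q * (q - 1) div 2 else q * (q - 2) div 2)"

lemma L_step: "q \<ge> 2 \<Longrightarrow> L (q+2) = L q + lenB q"
proof (cases "even q")
  case True
  assume "q \<ge> 2"
  then obtain k where k: "q = 2*k" using True by blast
  have "L q = k * (2*k-2)" unfolding L_def k using True k by (simp add: mult.assoc)
  moreover have "L (q+2) = (k+1) * (2*k)" unfolding L_def k using True k
    by (simp add: mult.assoc)
  moreover have "lenB q = 4*k" using True k by (simp add: lenB_def)
  moreover have "k \<ge> 1" using \<open>q \<ge> 2\<close> k by simp
  ultimately show ?thesis by (simp add: algebra_simps diff_mult_distrib2)
next
  case False
  then obtain k where k: "q = 2*k+1" using oddE by blast
  have "L q = (2*k+1)*k" unfolding L_def k by simp
  moreover have "L (q+2) = (2*k+3)*(k+1)" unfolding L_def k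
  proof -
    have "(2*k+1+2) * (2*k+1+2-1) = 2*((2*k+3)*(k+1))" by (simp add: algebra_simps)
    then show "(if odd (2*k+1+2) then (2*k+1+2) * (2*k+1+2-1) div 2 else (2*k+1+2) * (2*k+1+2-2) div 2) = (2*k+3)*(k+1)"
      by simp
  qed
  moreover have "lenB q = 4*k+3" using k by (simp add: lenB_def)
  ultimately show ?thesis by (simp add: algebra_simps)
qed

definition P :: "nat \<Rightarrow> nat list \<Rightarrow> bool" where
  "P q xs \<longleftrightarrow> C xs \<and> set xs \<subseteq> {0..<q} \<and> length xs = L q \<and> take 5 xs = [0,1,2,3,1]"

lemma P_step:
  assumes "q \<ge> 5" "P q xs"
  shows "P (q+2) (xs @ Bl q)"
proof -
  have t: "take 5 xs = [0,1,2,3,1]" and s: "set xs \<subseteq> {0..<q}" and c: "C xs" and len: "length xs = L q"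
    using assms(2) unfolding P_def by auto
  have l5: "length xs \<ge> 5"
  proof -
    have "length (take 5 xs) = 5" using t by simp
    then show ?thesis by simp
  qed
  have ne: "xs \<noteq> []" using l5 by auto
  have x0: "xs ! 0 = 0"
  proof -
    have "xs ! 0 = take 5 xs ! 0" by simp
    then show ?thesis using t by simp
  qed
  have lb: "length (Bl q) = lenB q" by (simp add: Bl_def)
  have bne: "Bl q \<noteq> []" using lenB_pos[OF assms(1)] lb by auto
  have b0: "Bl q ! 0 = 0" using lenB_pos[OF assms(1)] assms(1) bf_ev[of 0 q] by (simp add: Bl_def)
  have n: "Bl q ! i = bf q i" if "i < lenB q" for i using that by (simp add: Bl_def)
  have n2: "Bl q ! (Suc i mod lenB q) = bf q (Suc i mod lenB q)" for i
    using lenB_pos[OF assms(1)] by (simp add: Bl_def)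
  have C1: "C (xs @ Bl q)"
  proof (rule C_append[OF ne bne _ c C_Bl[OF assms(1)], where q = q])
    show "Bl q ! 0 = xs ! 0" using b0 x0 by simp
    show "\<forall>i<length xs. xs ! i < q \<and> xs ! (Suc i mod length xs) < q"
      using s ne by (auto intro!: nth_mem[THEN subsetD[OF s], simplified])
    show "\<forall>k<length (Bl q). \<not> (Bl q ! k < q \<and> Bl q ! (Suc k mod length (Bl q)) < q)"
      using lb n n2 Bl_big[OF assms(1)] by simp
  qed
  have S: "set (xs @ Bl q) \<subseteq> {0..<q+2}"
  proof -
    have "set (Bl q) \<subseteq> {0..<q+2}" using Bl_small[OF assms(1)] by (auto simp: Bl_def)
    then show ?thesis using s by auto
  qed
  have Ln: "length (xs @ Bl q) = L (q+2)" using len lb L_step[of q] assms(1) by simp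
  have T: "take 5 (xs @ Bl q) = [0,1,2,3,1]" using t l5 by simp
  show ?thesis unfolding P_def using C1 S Ln T by simp
qed

lemma C_code: "C xs = ((\<forall>i\<in>set [0..<length xs]. xs!i \<noteq> xs!(Suc i mod length xs)) \<and>
     (\<forall>i\<in>set [0..<length xs]. \<forall>j\<in>set [0..<length xs]. {xs!i, xs!(Suc i mod length xs)} = {xs!j, xs!(Suc j mod length xs)} \<longrightarrow> i = j))"
  unfolding C_def by auto

lemma P5: "P 5 [0,1,2,3,1,4,0,2,4,3]"
  unfolding P_def C_code L_def by (simp add: upt_rec doubleton_eq_iff)

lemma P6: "P 6 [0,1,2,3,1,4,0,2,5,3,4,5]"
  unfolding P_def C_code L_def by (simp add: upt_rec doubleton_eq_iff)

lemma P_odd: "\<exists>xs. P (5 + 2*k) xs"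
proof (induction k)
  case 0 then show ?case using P5 by auto
next
  case (Suc k)
  then obtain xs where "P (5+2*k) xs" by blast
  then have "P (5+2*k+2) (xs @ Bl (5+2*k))" by (intro P_step) auto
  then show ?case by (auto simp: add.assoc)
qed

lemma P_even: "\<exists>xs. P (6 + 2*k) xs"
proof (induction k)
  case 0 then show ?case using P6 by auto
next
  case (Suc k)
  then obtain xs where "P (6+2*k) xs" by blast
  then have "P (6+2*k+2) (xs @ Bl (6+2*k))" by (intro P_step) auto
  then show ?case by (auto simp: add.assoc)
qed

lemma P_ex: "q \<ge> 5 \<Longrightarrow> \<exists>xs. P q xs"
proof (cases "odd q")
  assume "q \<ge> 5" "odd q"
  then have "q = 5 + 2*((q-5) div 2)" by presburger
  then show ?thesis using P_odd by metis
next
  assume "q \<ge> 5" "\<not> odd q"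
  then have "q = 6 + 2*((q-6) div 2)" by presburger
  then show ?thesis using P_even by metis
qed

lemma seq_at_rotate:
  assumes "xs \<noteq> []" shows "seq_at (rotate k xs) i = seq_at xs (k + i)"
proof -
  have "i mod length xs < length xs" using assms by simp
  then have "rotate k xs ! (i mod length xs) = xs ! ((k + i mod length xs) mod length xs)"
    by (rule nth_rotate)
  also have "(k + i mod length xs) mod length xs = (k + i) mod length xs"
    by (rule mod_add_right_eq)
  finally show ?thesis unfolding seq_at_def by simp
qed

lemma orient_rotate:
  assumes "orientable_seq q n xs"
  shows "orientable_seq q n (rotate k xs)"
proof -
  have ne: "xs \<noteq> []" and st: "set xs \<subseteq> {0..<q}"
    and A: "\<And>i j. window xs n i = window xs n j \<Longrightarrow> i mod length xs = j mod length xs"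
    and B: "\<And>i j. window xs n i \<noteq> rev (window xs n j)"
    using assms unfolding orientable_seq_def by blast+
  have w: "window (rotate k xs) n i = window xs n (k + i)" for i
  proof -
    have "seq_at (rotate k xs) (i + t) = seq_at xs (k + i + t)" for t
      using seq_at_rotate[OF ne, of k "i+t"] by (simp add: add.assoc)
    then show ?thesis unfolding window_def by simp
  qed
  have A': "i mod length (rotate k xs) = j mod length (rotate k xs)"
    if "window (rotate k xs) n i = window (rotate k xs) n j" for i j
  proof -
    have "(k + i) mod length xs = (k + j) mod length xs" using that A unfolding w by blast
    then show ?thesis by (simp add: nat_mod_eq_iff)
  qed
  have B': "window (rotate k xs) n i \<noteq> rev (window (rotate k xs) n j)" for i j
    unfolding w by (rule B)
  have "rotate k xs \<noteq> []" using ne by simp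
  moreover have "set (rotate k xs) \<subseteq> {0..<q}" using st by simp
  ultimately show ?thesis unfolding orientable_seq_def using A' B' by blast
qed

lemma orient_map:
  assumes "orientable_seq q n xs" "inj_on f (set xs)" "f ` set xs \<subseteq> {0..<q'}"
  shows "orientable_seq q' n (map f xs)"
proof -
  have ne: "xs \<noteq> []"
    and A: "\<And>i j. window xs n i = window xs n j \<Longrightarrow> i mod length xs = j mod length xs"
    and B: "\<And>i j. window xs n i \<noteq> rev (window xs n j)"
    using assms(1) unfolding orientable_seq_def by blast+
  have sq: "seq_at (map f xs) i = f (seq_at xs i)" for i
  proof -
    have "i mod length xs < length xs" using ne by simp
    then show ?thesis unfolding seq_at_def by simp
  qed
  have w: "window (map f xs) n i = map f (window xs n i)" for i
    unfolding window_def sq by simp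
  have sw: "set (window xs n i) \<subseteq> set xs" for i
  proof
    fix a assume "a \<in> set (window xs n i)"
    then obtain t where "a = seq_at xs (i + t)" unfolding window_def by auto
    then have "a = xs ! ((i+t) mod length xs)" unfolding seq_at_def by simp
    moreover have "(i+t) mod length xs < length xs" using ne by simp
    ultimately show "a \<in> set xs" by simp
  qed
  have eq: "u = v" if "map f u = map f v" "set u \<subseteq> set xs" "set v \<subseteq> set xs" for u v
  proof -
    have "set u \<union> set v \<subseteq> set xs" using that(2,3) by simp
    then have "inj_on f (set u \<union> set v)" using inj_on_subset[OF assms(2)] by blast
    then show ?thesis using that(1) by (simp add: inj_on_map_eq_map)
  qed
  have A': "i mod length (map f xs) = j mod length (map f xs)"
    if "window (map f xs) n i = window (map f xs) n j" for i j
  proof -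
    have "window xs n i = window xs n j" using that unfolding w by (rule eq[OF _ sw sw])
    then have "i mod length xs = j mod length xs" by (rule A)
    then show ?thesis by simp
  qed
  have B': "window (map f xs) n i \<noteq> rev (window (map f xs) n j)" for i j
  proof
    assume "window (map f xs) n i = rev (window (map f xs) n j)"
    then have m: "map f (window xs n i) = map f (rev (window xs n j))" unfolding w by (simp add: rev_map)
    have s2: "set (rev (window xs n j)) \<subseteq> set xs" using sw[of j] by simp
    have "window xs n i = rev (window xs n j)" by (rule eq[OF m sw[of i] s2])
    then show False using B by blast
  qed
  have "map f xs \<noteq> []" using ne by simp
  moreover have "set (map f xs) \<subseteq> {0..<q'}" using assms(3) by simp
  ultimately show ?thesis unfolding orientable_seq_def using A' B' by blast
qed

lemma perm_ex:
  fixes q w x y z :: nat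
  assumes "w < q" "x < q" "y < q" "z < q" "distinct [w,x,y,z]"
  obtains f where "inj_on f {0..<q}" "f ` {0..<q} \<subseteq> {0..<q}" "f 0 = w" "f 1 = x" "f 2 = y" "f 3 = z"
proof -
  define P where "P = filter (\<lambda>v. v \<notin> {w,x,y,z}) [0..<q]"
  define ys where "ys = [w,x,y,z] @ P"
  have dP: "distinct P" unfolding P_def by simp
  have sP: "set P = {0..<q} - {w,x,y,z}" unfolding P_def by auto
  have d: "distinct ys" unfolding ys_def distinct_append using assms(5) dP sP by simp
  have sub: "{w,x,y,z} \<subseteq> {0..<q}" using assms(1-4) by simp
  have "set ys = {w,x,y,z} \<union> set P" unfolding ys_def by simp
  also have "\<dots> = {w,x,y,z} \<union> {0..<q}" unfolding sP Un_Diff_cancel ..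
  also have "\<dots> = {0..<q}" using sub by (rule Un_absorb1)
  finally have s: "set ys = {0..<q}" .
  have l: "length ys = q" using distinct_card[OF d] s by simp
  have i: "inj_on (nth ys) {0..<q}" using inj_on_nth[OF d] l by simp
  have im: "nth ys ` {0..<q} \<subseteq> {0..<q}"
  proof
    fix a assume "a \<in> nth ys ` {0..<q}"
    then obtain i where "i < length ys" "a = ys ! i" using l by auto
    then have "a \<in> set ys" by simp
    then show "a \<in> {0..<q}" using s by simp
  qed
  have "ys!0 = w" "ys!1 = x" "ys!2 = y" "ys!3 = z" unfolding ys_def by simp_all
  then show ?thesis using that[OF i im] by blast
qed

theorem lemma3p21:
  fixes q x y z :: nat
  assumes "q > 4"
    and "x < q" "y < q" "z < q"
    and "x \<noteq> y" "y \<noteq> z" "x \<noteq> z"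
  shows "(\<exists>xs. orientable_seq q 2 xs
            \<and> length xs = (if odd q then q * (q - 1) div 2 else q * (q - 2) div 2)
            \<and> take 4 xs = [x, y, z, x])
       \<and> (x \<noteq> 0 \<and> y \<noteq> 0 \<and> z \<noteq> 0 \<longrightarrow>
           (\<exists>xs. orientable_seq q 2 xs
            \<and> length xs = (if odd q then q * (q - 1) div 2 else q * (q - 2) div 2)
            \<and> take 5 xs = [0, x, y, z, x]))"
  proof -
  have q5: "q \<ge> 5" using assms(1) by simp
  obtain xs where P: "P q xs" using P_ex[OF q5] by blast
  have t: "take 5 xs = [0,1,2,3,1]" and s: "set xs \<subseteq> {0..<q}" and c: "C xs" and len: "length xs = L q"
    using P unfolding P_def by auto
  have l5: "length xs \<ge> 5"
  proof -
    have "length (take 5 xs) = 5" using t by simp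
    then show ?thesis by simp
  qed
  have ne: "xs \<noteq> []" using l5 by auto
  have O: "orientable_seq q 2 xs" using C_orient[OF ne c s] .
  have part1: "\<exists>xs. orientable_seq q 2 xs
            \<and> length xs = (if odd q then q * (q - 1) div 2 else q * (q - 2) div 2)
            \<and> take 4 xs = [x, y, z, x]"
  proof -
    have c4: "card {0,1,2,3::nat} = 4" by simp
    have c3: "card {x,y,z} = 3" using assms(5-7) by simp
    have nsub: "\<not> {0,1,2,3::nat} \<subseteq> {x,y,z}"
    proof
      assume h: "{0,1,2,3::nat} \<subseteq> {x,y,z}"
      have "card {0,1,2,3::nat} \<le> card {x,y,z}" using h by (rule card_mono[rotated]) simp
      then show False using c4 c3 by simp
    qed
    then obtain w where w: "w \<in> {0,1,2,3}" "w \<notin> {x,y,z}" by blast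
    have wq: "w < q" using w(1) q5 by auto
    have dd: "distinct [w,x,y,z]" using w(2) assms(5-7) by simp
    obtain f where f: "inj_on f {0..<q}" "f ` {0..<q} \<subseteq> {0..<q}" "f 0 = w" "f 1 = x" "f 2 = y" "f 3 = z"
      by (rule perm_ex[OF wq assms(2-4) dd])
    have fi: "inj_on f (set (rotate 1 xs))" using inj_on_subset[OF f(1) s] by simp
    have fs: "f ` set (rotate 1 xs) \<subseteq> {0..<q}" using subset_trans[OF image_mono[OF s, of f] f(2)] by simp
    define zs where "zs = map f (rotate 1 xs)"
    have o: "orientable_seq q 2 zs" unfolding zs_def
      by (rule orient_map[OF orient_rotate[OF O] fi fs])
    have tr: "take 4 (rotate 1 xs) = [1,2,3,1]"
    proof -
      have "rotate 1 xs = tl xs @ [hd xs]" using ne by (simp add: rotate1_hd_tl)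
      moreover have "take 4 (tl xs) = [1,2,3,1]" using t by (simp add: take_tl)
      moreover have "length (tl xs) \<ge> 4" using l5 by simp
      ultimately show ?thesis by simp
    qed
    have "take 4 zs = [x,y,z,x]" unfolding zs_def using tr f by (simp add: take_map)
    moreover have "length zs = L q" unfolding zs_def using len by simp
    ultimately show ?thesis using o unfolding L_def by blast
  qed
  have part2: "x \<noteq> 0 \<and> y \<noteq> 0 \<and> z \<noteq> 0 \<longrightarrow>
           (\<exists>xs. orientable_seq q 2 xs
            \<and> length xs = (if odd q then q * (q - 1) div 2 else q * (q - 2) div 2)
            \<and> take 5 xs = [0, x, y, z, x])"
  proof
    assume nz: "x \<noteq> 0 \<and> y \<noteq> 0 \<and> z \<noteq> 0"
    have dd: "distinct [0,x,y,z]" using nz assms(5-7) by simp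
    obtain f where f: "inj_on f {0..<q}" "f ` {0..<q} \<subseteq> {0..<q}" "f 0 = 0" "f 1 = x" "f 2 = y" "f 3 = z"
      by (rule perm_ex[OF _ assms(2-4) dd]) (use q5 in simp)
    have fi: "inj_on f (set xs)" using inj_on_subset[OF f(1) s] by simp
    have fs: "f ` set xs \<subseteq> {0..<q}" using subset_trans[OF image_mono[OF s, of f] f(2)] by simp
    define zs where "zs = map f xs"
    have o: "orientable_seq q 2 zs" unfolding zs_def
      by (rule orient_map[OF O fi fs])
    have "take 5 zs = [0,x,y,z,x]" unfolding zs_def using t f by (simp add: take_map)
    moreover have "length zs = L q" unfolding zs_def using len by simp
    ultimately show "\<exists>xs. orientable_seq q 2 xs
            \<and> length xs = (if odd q then q * (q - 1) div 2 else q * (q - 2) div 2)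
            \<and> take 5 xs = [0, x, y, z, x]" using o unfolding L_def by blast
  qed
  show ?thesis using part1 part2 by blast
qed

end
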